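(* Let $\mathbf{A}\in\mathbb{R}^{n\times n}$ be symmetric positive definite with (2-norm) condition number $\kappa$, let $\mathbf{y}\in\mathbb{R}^n$, and let $\mathbf{x}=\mathbf{A}^{-1}\mathbf{y}$. Let $\{\mathbf{x}_i\}_{i=0}^n$ be the iterates of the conjugate gradient (CG) method applied to $\mathbf{A}\mathbf{x}=\mathbf{y}$ with initial guess $\mathbf{x}_0=0$. Let $1\le i_{\min}<i_{\max}\le n$ be integers and let $Q$ be a random variable supported on $\{i_{\min},\dots,i_{\max}\}$ with $\mathbb{P}(Q=j)>0$ for each $j$ in this set. Define the TSS-Solve estimator \[ \widetilde{\mathbf{x}}_{\mathrm{tss}}=\frac{\mathbf{x}_Q-\mathbf{x}_{Q-1}}{\mathbb{P}(Q)}+\mathbf{x}_{i_{\min}-1}, \] where $\mathbb{P}(Q)$ denotes $\mathbb{P}(Q=j)$ at the realized value $j$ of $Q$. Then \[ \mathbb{E}\big[\widetilde{\mathbf{x}}_{\mathrm{tss}}\big]=\mathbf{x}_{i_{\max}} \qquad\text{and}\qquad \mathrm{Var}\big(\widetilde{\mathbf{x}}_{\mathrm{tss}}\big)\le 16\,\kappa^2\,\|\mathbf{x}\|^2\,\Gamma, \] where \[ \Gamma:=\sum_{j=i_{\min}}^{i_{\max}}\frac{\varrho^{2(j-1)}}{\mathbb{P}(Q=j)},\qquad \varrho:=\frac{\sqrt{\kappa}-1}{\sqrt{\kappa}+1}\in[0,1). \]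
   Context: CG is the standard conjugate gradient method in exact arithmetic: with $\mathbf{r}_0=\mathbf{y}-\mathbf{A}\mathbf{x}_0$, $\mathbf{p}_0=\mathbf{r}_0$, and for $j\ge0$: $\alpha_j=\mathbf{r}_j^\top\mathbf{r}_j/(\mathbf{p}_j^\top\mathbf{A}\mathbf{p}_j)$, $\mathbf{x}_{j+1}=\mathbf{x}_j+\alpha_j\mathbf{p}_j$, $\mathbf{r}_{j+1}=\mathbf{r}_j-\alpha_j\mathbf{A}\mathbf{p}_j$, $\beta_j=\mathbf{r}_{j+1}^\top\mathbf{r}_{j+1}/(\mathbf{r}_j^\top\mathbf{r}_j)$, $\mathbf{p}_{j+1}=\mathbf{r}_{j+1}+\beta_j\mathbf{p}_j$ (once the residual vanishes, subsequent iterates equal the exact solution). $\|\cdot\|$ is the Euclidean norm, and for a vector-valued random variable $X$, $\mathrm{Var}(X):=\mathbb{E}\|X-\mathbb{E}X\|^2$. *)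

theory Defs
  imports "HOL-Analysis.Analysis" "HOL-Probability.Probability"
begin

fun cg_state :: "real^'n^'n \<Rightarrow> real^'n \<Rightarrow> real^'n \<Rightarrow> nat \<Rightarrow> (real^'n) \<times> (real^'n) \<times> (real^'n)" where
  "cg_state A y x0 0 = (let r0 = y - A *v x0 in (x0, r0, r0))"
| "cg_state A y x0 (Suc j) =
     (let (x, r, p) = cg_state A y x0 j;
          \<alpha> = (r \<bullet> r) / (p \<bullet> (A *v p));
          x' = x + \<alpha> *\<^sub>R p;
          r' = r - \<alpha> *\<^sub>R (A *v p);
          \<beta> = (r' \<bullet> r') / (r \<bullet> r);
          p' = r' + \<beta> *\<^sub>R p
      in (x', r', p'))"

definition cg_iterate :: "real^'n^'n \<Rightarrow> real^'n \<Rightarrow> real^'n \<Rightarrow> nat \<Rightarrow> real^'n" where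
  "cg_iterate A y x0 j = fst (cg_state A y x0 j)"

definition cond2 :: "real^'n^'n \<Rightarrow> real" where
  "cond2 A = onorm (\<lambda>v. A *v v) * onorm (\<lambda>v. matrix_inv A *v v)"

end

theory Submission
  imports Defs
begin
locale spd =
  fixes A :: "real^'n^'n"
  assumes symm: "transpose A = A"
    and posdef: "\<forall>v. v \<noteq> 0 \<longrightarrow> v \<bullet> (A *v v) > 0"
begin

definition "M = onorm (\<lambda>v. A *v v)"
definition "N = onorm (\<lambda>v. matrix_inv A *v v)"
definition "q v = v \<bullet> (A *v v)"

lemma sym_inner: "(A *v u) \<bullet> v = u \<bullet> (A *v v)"
  by (metis dot_lmul_matrix symm vector_transpose_matrix)

lemma sym2: "u \<bullet> (A *v v) = v \<bullet> (A *v u)"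
  by (metis inner_commute sym_inner)

lemma q_nonneg: "q v \<ge> 0"
  using posdef unfolding q_def by (cases "v = 0") (auto intro: less_imp_le)

lemma q_pos: "v \<noteq> 0 \<Longrightarrow> q v > 0"
  using posdef unfolding q_def by auto

lemma q_zero_iff: "q v = 0 \<longleftrightarrow> v = 0"
  using q_pos[of v] unfolding q_def by (cases "v = 0") auto

lemma inj_A: "inj ((*v) A)"
  unfolding vec.inj_iff_eq_0
  using posdef by force

lemma invertible_A: "invertible A"
  using inj_A matrix_left_invertible_injective invertible_left_inverse by blast

lemma inv_props: "A ** matrix_inv A = mat 1 \<and> matrix_inv A ** A = mat 1"
  using invertible_A unfolding invertible_def matrix_inv_def by (rule someI_ex)

lemma A_inv_A: "A *v (matrix_inv A *v v) = v"
  using inv_props by (metis matrix_vector_mul_assoc matrix_vector_mul_lid)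

lemma inv_A_A: "matrix_inv A *v (A *v v) = v"
  using inv_props by (metis matrix_vector_mul_assoc matrix_vector_mul_lid)

lemma normA: "norm (A *v v) \<le> M * norm v"
  unfolding M_def by (rule onorm[OF matrix_vector_mul_bounded_linear])

lemma normAinv: "norm v \<le> N * norm (A *v v)"
  unfolding N_def using onorm[OF matrix_vector_mul_bounded_linear, of "matrix_inv A" "A *v v"]
  by (simp add: inv_A_A)

lemma M_nonneg: "M \<ge> 0" unfolding M_def by (simp add: onorm_pos_le matrix_vector_mul_bounded_linear)
lemma N_nonneg: "N \<ge> 0" unfolding N_def by (simp add: onorm_pos_le matrix_vector_mul_bounded_linear)

lemma q_CS: "(u \<bullet> (A *v v))^2 \<le> q u * q v"
proof (cases "v = 0")
  case True then show ?thesis by (simp add: q_def)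
next
  case False
  then have qv: "q v > 0" by (rule q_pos)
  define t where "t = (u \<bullet> (A *v v)) / q v"
  have "0 \<le> q (u - t *\<^sub>R v)" by (rule q_nonneg)
  also have "q (u - t *\<^sub>R v) = q u - 2 * t * (u \<bullet> (A *v v)) + t^2 * q v"
    unfolding q_def
    by (simp add: matrix_vector_mult_diff_distrib matrix_vector_mult_scaleR inner_diff_left
        inner_diff_right sym2[of v u] power2_eq_square algebra_simps)
  also have "\<dots> = q u - (u \<bullet> (A *v v))^2 / q v"
    using qv unfolding t_def by (simp add: field_simps power2_eq_square)
  finally show ?thesis using qv by (simp add: field_simps)
qed

lemma sq_le_aux: "(a::real) \<ge> 0 \<Longrightarrow> b \<ge> 0 \<Longrightarrow> a^2 \<le> a * b \<Longrightarrow> a \<le> b"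
proof (rule ccontr)
  assume h: "a \<ge> 0" "b \<ge> 0" "a^2 \<le> a * b" "\<not> a \<le> b"
  then have "a * b < a * a" by (intro mult_strict_left_mono) auto
  then show False using h by (simp add: power2_eq_square)
qed

lemma U1: "q s \<le> M * (norm s)^2"
proof -
  have "q s \<le> norm s * norm (A *v s)" unfolding q_def by (rule norm_cauchy_schwarz)
  also have "\<dots> \<le> norm s * (M * norm s)" by (rule mult_left_mono[OF normA]) simp
  finally show ?thesis by (simp add: power2_eq_square algebra_simps)
qed

lemma L1: "q s \<le> N * (norm (A *v s))^2"
proof -
  have "q s \<le> norm s * norm (A *v s)" unfolding q_def by (rule norm_cauchy_schwarz)
  also have "\<dots> \<le> (N * norm (A *v s)) * norm (A *v s)" by (rule mult_right_mono[OF normAinv]) simp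
  finally show ?thesis by (simp add: power2_eq_square algebra_simps)
qed

lemma L2: "(norm s)^2 \<le> N * q s"
proof -
  define w where "w = matrix_inv A *v s"
  have Aw: "A *v w = s" unfolding w_def by (rule A_inv_A)
  have "(norm s)^2 = w \<bullet> (A *v s)"
  proof -
    have "(norm s)^2 = s \<bullet> s" by (simp add: power2_norm_eq_inner)
    also have "\<dots> = (A *v w) \<bullet> s" by (simp add: Aw)
    finally show ?thesis by (simp add: sym_inner)
  qed
  then have 1: "((norm s)^2)^2 \<le> q w * q s" using q_CS[of w s] by simp
  have "q w \<le> N * (norm s)^2" using L1[of w] Aw by simp
  then have "q w * q s \<le> (N * (norm s)^2) * q s" by (rule mult_right_mono) (rule q_nonneg)
  with 1 have 2: "((norm s)^2)^2 \<le> (N * (norm s)^2) * q s" by (rule order_trans)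
  have 3: "(N * (norm s)^2) * q s = (norm s)^2 * (N * q s)" by (simp only: ac_simps)
  show ?thesis
    apply (rule sq_le_aux)
      apply simp
     apply (rule mult_nonneg_nonneg[OF N_nonneg q_nonneg])
    using 2 3 by simp
qed

lemma U2: "(norm (A *v s))^2 \<le> M * q s"
proof -
  define u where "u = A *v s"
  have "(norm u)^2 = u \<bullet> (A *v s)"
    by (simp add: u_def power2_norm_eq_inner)
  then have 1: "((norm u)^2)^2 \<le> q u * q s" using q_CS[of u s] by simp
  have "q u * q s \<le> (M * (norm u)^2) * q s" by (rule mult_right_mono[OF U1]) (rule q_nonneg)
  with 1 have 2: "((norm u)^2)^2 \<le> (M * (norm u)^2) * q s" by (rule order_trans)
  have 3: "(M * (norm u)^2) * q s = (norm u)^2 * (M * q s)" by (simp only: ac_simps)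
  show ?thesis unfolding u_def[symmetric]
    apply (rule sq_le_aux)
      apply simp
     apply (rule mult_nonneg_nonneg[OF M_nonneg q_nonneg])
    using 2 3 by simp
qed

lemma kappa_ge1: "M * N \<ge> 1"
proof -
  obtain i :: 'n where True by simp
  define s :: "real^'n" where "s = axis i 1"
  have s0: "(norm s)^2 > 0" unfolding s_def by (simp add: axis_eq_0_iff)
  have 1: "(norm s)^2 \<le> N * q s" by (rule L2)
  have 2: "N * q s \<le> N * (M * (norm s)^2)" by (rule mult_left_mono[OF U1 N_nonneg])
  have "1 * (norm s)^2 \<le> (M * N) * (norm s)^2" using order_trans[OF 1 2] by (simp only: ac_simps mult_1)
  then show ?thesis using s0 by (rule mult_le_cancel_right_pos[THEN iffD1, rotated])
qed

lemma M_pos: "M > 0" using kappa_ge1 M_nonneg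
  by (cases "M = 0") (auto simp: less_le)
lemma N_pos: "N > 0" using kappa_ge1 N_nonneg
  by (cases "N = 0") (auto simp: less_le)

end

context spd begin

definition "ip u v = u \<bullet> (A *v v)"
definition "Bop \<sigma> \<tau> v = \<sigma> *\<^sub>R v - \<tau> *\<^sub>R (A *v v)"

lemma q_ip: "q v = ip v v" by (simp add: q_def ip_def)
lemma ip_sym: "ip u v = ip v u" by (simp add: ip_def sym2)
lemma ip_add_left: "ip (a + b) c = ip a c + ip b c" by (simp add: ip_def inner_add_left)
lemma ip_add_right: "ip a (b + c) = ip a b + ip a c" by (simp add: ip_def inner_add_right matrix_vector_right_distrib)
lemma ip_diff_left: "ip (a - b) c = ip a c - ip b c" by (simp add: ip_def inner_diff_left)
lemma ip_diff_right: "ip a (b - c) = ip a b - ip a c" by (simp add: ip_def inner_diff_right matrix_vector_mult_diff_distrib)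
lemma ip_scale_left: "ip (r *\<^sub>R a) c = r * ip a c" by (simp add: ip_def)
lemma ip_scale_right: "ip a (r *\<^sub>R c) = r * ip a c" by (simp add: ip_def matrix_vector_mult_scaleR)

lemma q_add: "q (a + b) = q a + 2 * ip a b + q b"
  unfolding q_ip ip_add_left ip_add_right using ip_sym[of b a] by simp
lemma q_diff: "q (a - b) = q a - 2 * ip a b + q b"
  unfolding q_ip ip_diff_left ip_diff_right using ip_sym[of b a] by simp

lemma B_add: "Bop s t (u + v) = Bop s t u + Bop s t v"
  by (simp add: Bop_def matrix_vector_right_distrib algebra_simps)
lemma B_diff: "Bop s t (u - v) = Bop s t u - Bop s t v"
  by (simp add: Bop_def matrix_vector_mult_diff_distrib algebra_simps)
lemma B_scale: "Bop s t (r *\<^sub>R v) = r *\<^sub>R Bop s t v"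
  by (simp add: Bop_def matrix_vector_mult_scaleR algebra_simps)
lemma B_zero: "Bop s t 0 = 0"
  by (simp add: Bop_def)

lemma B_sa: "ip u (Bop s t v) = ip (Bop s t u) v"
proof -
  have "u \<bullet> (A *v (A *v v)) = (A *v u) \<bullet> (A *v v)" by (simp add: sym_inner)
  then show ?thesis
    by (simp add: ip_def Bop_def matrix_vector_mult_diff_distrib matrix_vector_mult_scaleR
        inner_diff_left inner_diff_right)
qed

lemma rot_inv:
  fixes t u s r
  defines "B \<equiv> Bop s r"
  shows "q (B t - (u - B (B u))) + q (B u + t) - q (B (B u + t)) = q t + q u - q (B u)"
proof -
  let ?C = "u - B (B u)"
  have e1: "q (B t - ?C) = q (B t) - 2 * ip (B t) ?C + q ?C" by (rule q_diff)
  have e2: "q (B u + t) = q (B u) + 2 * ip (B u) t + q t" by (rule q_add)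
  have e3: "q (B (B u + t)) = q (B (B u)) + 2 * ip (B (B u)) (B t) + q (B t)"
    unfolding B_def B_add by (rule q_add)
  have e4: "q ?C = q u - 2 * ip u (B (B u)) + q (B (B u))" by (rule q_diff)
  have e5: "ip (B t) ?C = ip (B t) u - ip (B t) (B (B u))" by (rule ip_diff_right)
  have e6: "ip (B t) u = ip (B u) t" unfolding B_def using B_sa[of t s r u] ip_sym by metis
  have e7: "ip u (B (B u)) = q (B u)" unfolding B_def q_ip by (rule B_sa)
  have e8: "ip (B t) (B (B u)) = ip (B (B u)) (B t)" by (rule ip_sym)
  show ?thesis using e1 e2 e3 e4 e5 e6 e7 e8 by linarith
qed

lemma contraction:
  assumes "\<And>v. \<bar>ip v (Bop s r v)\<bar> \<le> q v"
  shows "q (Bop s r u) \<le> q u"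
proof -
  let ?B = "Bop s r"
  let ?v = "?B u"
  have p1: "ip (u + ?v) (?B (u + ?v)) \<le> q (u + ?v)" using assms[of "u + ?v"] by simp
  have p2: "- ip (u - ?v) (?B (u - ?v)) \<le> q (u - ?v)" using assms[of "u - ?v"] by simp
  have x1: "ip (u + ?v) (?B (u + ?v)) = ip u (?B u) + ip u (?B ?v) + ip ?v (?B u) + ip ?v (?B ?v)"
    unfolding B_add ip_add_left ip_add_right by simp
  have x2: "ip (u - ?v) (?B (u - ?v)) = ip u (?B u) - ip u (?B ?v) - ip ?v (?B u) + ip ?v (?B ?v)"
    unfolding B_diff ip_diff_left ip_diff_right by simp
  have x3: "ip u (?B ?v) = q ?v" unfolding q_ip by (rule B_sa)
  have x4: "ip ?v (?B u) = q ?v" unfolding q_ip by simp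
  have x5: "q (u + ?v) = q u + 2 * ip u ?v + q ?v" by (rule q_add)
  have x6: "q (u - ?v) = q u - 2 * ip u ?v + q ?v" by (rule q_diff)
  show ?thesis using p1 p2 x1 x2 x3 x4 x5 x6 by linarith
qed

fun cheb :: "real \<Rightarrow> real \<Rightarrow> real^'n \<Rightarrow> nat \<Rightarrow> real^'n" where
  "cheb s r x 0 = x"
| "cheb s r x (Suc 0) = Bop s r x"
| "cheb s r x (Suc (Suc k)) = 2 *\<^sub>R Bop s r (cheb s r x (Suc k)) - cheb s r x k"

fun chebu :: "real \<Rightarrow> real \<Rightarrow> real^'n \<Rightarrow> nat \<Rightarrow> real^'n" where
  "chebu s r x 0 = 0"
| "chebu s r x (Suc k) = Bop s r (chebu s r x k) + cheb s r x k"

lemma cheb_rot: "cheb s r x (Suc k) = Bop s r (cheb s r x k) - (chebu s r x k - Bop s r (Bop s r (chebu s r x k)))"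
proof (induction k rule: nat_less_induct)
  case (1 k)
  show ?case
  proof (cases k)
    case 0 then show ?thesis by (simp add: B_zero)
  next
    case (Suc m)
    have IH: "cheb s r x (Suc m) = Bop s r (cheb s r x m) - (chebu s r x m - Bop s r (Bop s r (chebu s r x m)))"
      using 1 Suc by simp
    have h: "Bop s r (cheb s r x (Suc m)) = Bop s r (Bop s r (cheb s r x m)) - Bop s r (chebu s r x m) + Bop s r (Bop s r (Bop s r (chebu s r x m)))"
      unfolding IH by (simp add: B_add B_diff)
    show ?thesis unfolding Suc cheb.simps chebu.simps B_add
      by (simp add: h scaleR_2 algebra_simps)
  qed
qed

lemma cheb_inv: "q (cheb s r x k) + q (chebu s r x k) - q (Bop s r (chebu s r x k)) = q x"
proof (induction k)
  case 0 then show ?case by (simp add: B_zero q_def)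
next
  case (Suc k)
  show ?case unfolding cheb_rot chebu.simps rot_inv using Suc by simp
qed

lemma cheb_bound:
  assumes "\<And>v. \<bar>ip v (Bop s r v)\<bar> \<le> q v"
  shows "q (cheb s r x k) \<le> q x"
  using cheb_inv[of s r x k] contraction[OF assms, of "chebu s r x k"] by linarith

end

context spd begin

definition "Kr y j = span ((\<lambda>i. ((*v) A ^^ i) y) ` {..<j})"

lemma Kr_mono: "k \<le> m \<Longrightarrow> Kr y k \<subseteq> Kr y m"
  unfolding Kr_def by (intro span_mono image_mono) auto

lemma y_Kr: "y \<in> Kr y (Suc k)"
  unfolding Kr_def by (rule span_base, rule image_eqI[of _ _ 0]) auto

lemma A_Kr: assumes "w \<in> Kr y k" shows "A *v w \<in> Kr y (Suc k)"
proof -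
  have "A *v w \<in> (*v) A ` Kr y k" using assms by blast
  also have "\<dots> = span ((*v) A ` (\<lambda>i. ((*v) A ^^ i) y) ` {..<k})"
    unfolding Kr_def by (rule linear_span_image[OF matrix_vector_mul_linear, symmetric])
  also have "\<dots> \<subseteq> Kr y (Suc k)"
    unfolding Kr_def
  proof (rule span_mono, rule image_subsetI)
    fix z assume "z \<in> (\<lambda>i. ((*v) A ^^ i) y) ` {..<k}"
    then obtain i where "i < k" "z = ((*v) A ^^ i) y" by auto
    then show "A *v z \<in> (\<lambda>i. ((*v) A ^^ i) y) ` {..<Suc k}"
      by (intro image_eqI[of _ _ "Suc i"]) auto
  qed
  finally show ?thesis .
qed

fun chebs :: "real \<Rightarrow> nat \<Rightarrow> real" where
  "chebs s 0 = 1"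
| "chebs s (Suc 0) = s"
| "chebs s (Suc (Suc k)) = 2 * s * chebs s (Suc k) - chebs s k"

lemma nat_2induct:
  assumes "P 0" "P (Suc 0)" "\<And>k. P k \<Longrightarrow> P (Suc k) \<Longrightarrow> P (Suc (Suc k))"
  shows "P n"
proof (induction n rule: less_induct)
  case (less n)
  show ?case
  proof (cases n)
    case 0 then show ?thesis using assms by simp
  next
    case (Suc m)
    then show ?thesis
    proof (cases m)
      case 0 then show ?thesis using assms Suc by simp
    next
      case (Suc k)
      then show ?thesis using assms(3)[of k] less \<open>n = Suc m\<close> by simp
    qed
  qed
qed

lemma cheb_mem:
  assumes Ax: "A *v x = y"
  shows "cheb s r x k - chebs s k *\<^sub>R x \<in> Kr y k"
proof (induction k rule: nat_2induct)
  case 1 then show ?case by (simp add: Kr_def span_zero)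
next
  case 2
  have "cheb s r x (Suc 0) - chebs s (Suc 0) *\<^sub>R x = (- r) *\<^sub>R y"
    by (simp add: Bop_def Ax)
  moreover have "(- r) *\<^sub>R y \<in> Kr y (Suc 0)" using y_Kr[of y 0] unfolding Kr_def by (rule span_scale)
  ultimately show ?case by simp
next
  case (3 k)
  let ?c1 = "cheb s r x (Suc k)" and ?c0 = "cheb s r x k"
  let ?w1 = "?c1 - chebs s (Suc k) *\<^sub>R x" and ?w0 = "?c0 - chebs s k *\<^sub>R x"
  have w1: "?w1 \<in> Kr y (Suc (Suc k))" using 3(2) Kr_mono[of "Suc k" "Suc (Suc k)" y] by auto
  have w0: "?w0 \<in> Kr y (Suc (Suc k))" using 3(1) Kr_mono[of "k" "Suc (Suc k)" y] by auto
  have Aw1: "A *v ?w1 \<in> Kr y (Suc (Suc k))" using A_Kr[OF 3(2)] .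
  have eq: "cheb s r x (Suc (Suc k)) - chebs s (Suc (Suc k)) *\<^sub>R x
      = (2 * s) *\<^sub>R ?w1 - (2 * r) *\<^sub>R (A *v ?w1) - (2 * r * chebs s (Suc k)) *\<^sub>R y - ?w0"
    by (simp add: Bop_def Ax[symmetric] matrix_vector_mult_diff_distrib matrix_vector_mult_scaleR
        algebra_simps scaleR_2)
  have yK: "y \<in> Kr y (Suc (Suc k))" by (rule y_Kr)
  show ?case unfolding eq Kr_def
    using w1 w0 Aw1 yK unfolding Kr_def
    by (meson span_diff span_scale)
qed

end

context spd begin

definition "X y j = cg_iterate A y 0 j"
definition "R y j = fst (snd (cg_state A y 0 j))"
definition "P y j = snd (snd (cg_state A y 0 j))"
definition "alpha y j = (R y j \<bullet> R y j) / (P y j \<bullet> (A *v P y j))"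

lemma span_P_mono: "w \<in> span (P y ` {..<a}) \<Longrightarrow> a \<le> b \<Longrightarrow> w \<in> span (P y ` {..<b})"
proof -
  assume "w \<in> span (P y ` {..<a})" "a \<le> b"
  moreover have "P y ` {..<a} \<subseteq> P y ` {..<b}" using \<open>a \<le> b\<close> by (intro image_mono) auto
  ultimately show ?thesis using span_mono by blast
qed

lemma cg_0: "X y 0 = 0" "R y 0 = y" "P y 0 = y"
  by (simp_all add: X_def R_def P_def cg_iterate_def)

lemma cg_Suc:
  "X y (Suc j) = X y j + alpha y j *\<^sub>R P y j"
  "R y (Suc j) = R y j - alpha y j *\<^sub>R (A *v P y j)"
  "P y (Suc j) = R y (Suc j) + ((R y (Suc j) \<bullet> R y (Suc j)) / (R y j \<bullet> R y j)) *\<^sub>R P y j"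
proof -
  obtain a b c where abc: "cg_state A y 0 j = (a, b, c)" by (metis prod_cases3)
  show "X y (Suc j) = X y j + alpha y j *\<^sub>R P y j"
    "R y (Suc j) = R y j - alpha y j *\<^sub>R (A *v P y j)"
    "P y (Suc j) = R y (Suc j) + ((R y (Suc j) \<bullet> R y (Suc j)) / (R y j \<bullet> R y j)) *\<^sub>R P y j"
    by (simp_all add: X_def R_def P_def alpha_def cg_iterate_def abc Let_def)
qed

lemma R_eq: "R y j = y - A *v X y j"
  by (induction j) (simp_all add: cg_0 cg_Suc matrix_vector_right_distrib matrix_vector_mult_scaleR)

lemma R_zero_Suc: "R y j = 0 \<Longrightarrow> R y (Suc j) = 0"
  by (simp add: cg_Suc alpha_def)

lemma R_zero_mono: "R y i = 0 \<Longrightarrow> i \<le> j \<Longrightarrow> R y j = 0"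
  by (induction j) (auto simp: le_Suc_eq intro: R_zero_Suc)

lemma RPs_step:
  assumes "R y j \<bullet> P y j = R y j \<bullet> R y j"
  shows "R y (Suc j) \<bullet> P y j = 0"
proof -
  let ?r = "R y j" and ?p = "P y j"
  have e: "R y (Suc j) \<bullet> ?p = ?r \<bullet> ?r - alpha y j * (?p \<bullet> (A *v ?p))"
    unfolding cg_Suc using assms by (simp add: inner_diff_left sym_inner)
  show ?thesis
  proof (cases "?p \<bullet> (A *v ?p) = 0")
    case True
    then have "?p = 0" using q_zero_iff unfolding q_def by blast
    then have "?r \<bullet> ?r = 0" using assms by simp
    then show ?thesis unfolding e by (simp add: alpha_def)
  next
    case False
    then show ?thesis unfolding e by (simp add: alpha_def)
  qed
qed

lemma RP: "R y j \<bullet> P y j = R y j \<bullet> R y j"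
proof (induction j)
  case 0 then show ?case by (simp add: cg_0)
next
  case (Suc j)
  have "R y (Suc j) \<bullet> P y j = 0" by (rule RPs_step[OF Suc])
  then show ?case
    by (subst (1) cg_Suc(3)) (simp add: inner_add_right)
qed

lemma RPs: "R y (Suc j) \<bullet> P y j = 0"
  by (rule RPs_step[OF RP])

lemma R_in: "R y k \<in> span (P y ` {..<Suc k})"
proof (cases k)
  case 0 then show ?thesis by (simp add: cg_0 span_base)
next
  case (Suc m)
  have eq: "R y (Suc m) = P y (Suc m) - ((R y (Suc m) \<bullet> R y (Suc m)) / (R y m \<bullet> R y m)) *\<^sub>R P y m"
    by (subst cg_Suc(3)) simp
  have "P y (Suc m) \<in> span (P y ` {..<Suc (Suc m)})" by (rule span_base) auto
  moreover have "P y m \<in> span (P y ` {..<Suc (Suc m)})" by (rule span_base) auto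
  ultimately have "P y (Suc m) - ((R y (Suc m) \<bullet> R y (Suc m)) / (R y m \<bullet> R y m)) *\<^sub>R P y m \<in> span (P y ` {..<Suc (Suc m)})"
    by (intro span_diff span_scale)
  then show ?thesis unfolding Suc using eq by simp
qed

lemma alpha_pos:
  assumes "R y i \<noteq> 0"
  shows "alpha y i > 0" "P y i \<bullet> (A *v P y i) > 0" "R y i \<bullet> R y i > 0"
proof -
  show rr: "R y i \<bullet> R y i > 0" using assms by simp
  have "P y i \<noteq> 0" using RP[of y i] rr by auto
  then show pp: "P y i \<bullet> (A *v P y i) > 0" using posdef by auto
  show "alpha y i > 0" unfolding alpha_def using rr pp by simp
qed

lemma AP_eq:
  assumes "R y i \<noteq> 0"
  shows "A *v P y i = (1 / alpha y i) *\<^sub>R (R y i - R y (Suc i))"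
  using alpha_pos[OF assms] by (simp add: cg_Suc(2))

lemma AP_in:
  assumes "R y i \<noteq> 0"
  shows "A *v P y i \<in> span (P y ` {..<Suc (Suc i)})"
proof -
  have "R y i \<in> span (P y ` {..<Suc (Suc i)})"
    using span_P_mono[OF R_in[of y i]] by auto
  moreover have "R y (Suc i) \<in> span (P y ` {..<Suc (Suc i)})" by (rule R_in)
  ultimately show ?thesis unfolding AP_eq[OF assms] by (intro span_scale span_diff)
qed

lemma orth_span:
  assumes "\<forall>i<j. v \<bullet> P y i = 0" "w \<in> span (P y ` {..<j})"
  shows "v \<bullet> w = 0"
  using orthogonal_to_span[OF assms(2), of v] assms(1) unfolding orthogonal_def by auto

lemma main_orth:
  "(\<forall>i<j. R y i \<noteq> 0) \<Longrightarrow> (\<forall>i<j. R y j \<bullet> P y i = 0) \<and> (\<forall>i<j. P y j \<bullet> (A *v P y i) = 0)"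
proof (induction j)
  case 0 then show ?case by simp
next
  case (Suc j)
  have nd: "\<forall>i<j. R y i \<noteq> 0" using Suc.prems by auto
  have rj: "R y j \<noteq> 0" using Suc.prems by auto
  note IH = Suc.IH[OF nd]
  let ?a = "alpha y j" and ?r = "R y j" and ?p = "P y j" and ?r' = "R y (Suc j)"
  have b: "\<forall>i<Suc j. ?r' \<bullet> P y i = 0"
  proof (intro allI impI)
    fix i assume i: "i < Suc j"
    show "?r' \<bullet> P y i = 0"
    proof (cases "i = j")
      case True then show ?thesis using RPs by simp
    next
      case False
      then have "i < j" using i by simp
      then have "?r \<bullet> P y i = 0" "?p \<bullet> (A *v P y i) = 0" using IH by auto
      then show ?thesis unfolding cg_Suc(2)
        by (simp add: inner_diff_left sym_inner)
    qed
  qed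
  have c: "\<forall>i<Suc j. P y (Suc j) \<bullet> (A *v P y i) = 0"
  proof (intro allI impI)
    fix i assume i: "i < Suc j"
    show "P y (Suc j) \<bullet> (A *v P y i) = 0"
    proof (cases "i = j")
      case False
      then have ij: "i < j" using i by simp
      have ri: "R y i \<noteq> 0" using nd ij by auto
      have "A *v P y i \<in> span (P y ` {..<Suc j})"
        using span_P_mono[OF AP_in[OF ri]] ij by auto
      then have 1: "?r' \<bullet> (A *v P y i) = 0" by (rule orth_span[OF b])
      have 2: "?p \<bullet> (A *v P y i) = 0" using IH ij by auto
      show ?thesis unfolding cg_Suc(3)[of y j] using 1 2 by (simp add: inner_add_left)
    next
      case True
      have pos: "?a > 0" "?p \<bullet> (A *v ?p) > 0" "?r \<bullet> ?r > 0" using alpha_pos[OF rj] by auto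
      have rr': "?r' \<bullet> ?r = 0" using orth_span[OF b R_in[of y j]] .
      have 1: "?r' \<bullet> (A *v ?p) = - (?r' \<bullet> ?r') / ?a"
        unfolding AP_eq[OF rj] using rr' by (simp add: inner_diff_right)
      have 2: "?p \<bullet> (A *v ?p) = (?r \<bullet> ?r) / ?a"
        using pos unfolding alpha_def by (simp add: field_simps)
      show ?thesis unfolding True cg_Suc(3)[of y j] using pos
        by (simp add: inner_add_left 1 2 field_simps)
    qed
  qed
  show ?case using b c by blast
qed

lemma X_in: "X y j \<in> span (P y ` {..<j})"
proof (induction j)
  case 0 then show ?case by (simp add: cg_0 span_zero)
next
  case (Suc j)
  have "X y j \<in> span (P y ` {..<Suc j})"
    using span_P_mono[OF Suc] by auto
  moreover have "P y j \<in> span (P y ` {..<Suc j})" by (rule span_base) auto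
  ultimately show ?case unfolding cg_Suc by (intro span_add span_scale)
qed

lemma A_span_P:
  assumes "\<forall>i<m. R y i \<noteq> 0" "w \<in> span (P y ` {..<m})"
  shows "A *v w \<in> span (P y ` {..<Suc m})"
proof -
  have "A *v w \<in> (*v) A ` span (P y ` {..<m})" using assms(2) by blast
  also have "\<dots> = span ((*v) A ` P y ` {..<m})"
    by (rule linear_span_image[OF matrix_vector_mul_linear, symmetric])
  also have "\<dots> \<subseteq> span (span (P y ` {..<Suc m}))"
  proof (rule span_mono, rule image_subsetI)
    fix z assume "z \<in> P y ` {..<m}"
    then obtain i where i: "i < m" "z = P y i" by auto
    then have "A *v z \<in> span (P y ` {..<Suc (Suc i)})" using AP_in assms(1) by auto
    also have "\<dots> \<subseteq> span (P y ` {..<Suc m})" using i by (intro span_mono image_mono) auto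
    finally show "A *v z \<in> span (P y ` {..<Suc m})" .
  qed
  also have "\<dots> = span (P y ` {..<Suc m})" by (rule span_span)
  finally show ?thesis .
qed

lemma Kr_sub:
  assumes "\<forall>i<j. R y i \<noteq> 0"
  shows "Kr y j \<subseteq> span (P y ` {..<j})"
proof -
  have pw: "i < j \<Longrightarrow> ((*v) A ^^ i) y \<in> span (P y ` {..<Suc i})" for i
  proof (induction i)
    case 0
    have "P y 0 \<in> span (P y ` {..<Suc 0})" by (rule span_base) auto
    then show ?case by (simp add: cg_0)
  next
    case (Suc i)
    then have "((*v) A ^^ i) y \<in> span (P y ` {..<Suc i})" by simp
    moreover have "\<forall>k<Suc i. R y k \<noteq> 0" using assms Suc by auto
    ultimately show ?case using A_span_P by simp
  qed
  show ?thesis unfolding Kr_def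
  proof (rule span_minimal[OF _ subspace_span], rule image_subsetI)
    fix i assume "i \<in> {..<j}"
    then show "((*v) A ^^ i) y \<in> span (P y ` {..<j})"
      using span_P_mono[OF pw[of i]] by auto
  qed
qed

lemma cg_opt:
  assumes Ax: "A *v x = y" and z: "z \<in> Kr y j"
  shows "q (x - X y j) \<le> q (x - z)"
proof (cases "\<forall>i<j. R y i \<noteq> 0")
  case True
  have orth: "\<forall>i<j. R y j \<bullet> P y i = 0" using main_orth[OF True] by blast
  let ?e = "x - X y j" and ?w = "X y j - z"
  have w: "?w \<in> span (P y ` {..<j})" using X_in Kr_sub[OF True] z by (intro span_diff) auto
  have Ae: "A *v ?e = R y j" by (simp add: R_eq Ax matrix_vector_mult_diff_distrib)
  have "ip ?e ?w = (A *v ?e) \<bullet> ?w" by (simp add: ip_def sym_inner)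
  also have "\<dots> = 0" unfolding Ae by (rule orth_span[OF orth w])
  finally have 0: "ip ?e ?w = 0" .
  have "q (x - z) = q ?e + 2 * ip ?e ?w + q ?w" using q_add[of ?e ?w] by simp
  then show ?thesis using q_nonneg[of ?w] 0 by simp
next
  case False
  then obtain i where "i < j" "R y i = 0" by auto
  then have "R y j = 0" using R_zero_mono by auto
  then have "A *v (x - X y j) = 0" by (simp add: R_eq Ax matrix_vector_mult_diff_distrib)
  then have "x - X y j = 0" using inj_A unfolding vec.inj_iff_eq_0 by blast
  then show ?thesis using q_nonneg by (simp add: q_def)
qed

end

context spd begin

definition "kap = M * N"
definition "rho = (sqrt kap - 1) / (sqrt kap + 1)"

lemma q_scale: "q (r *\<^sub>R v) = r^2 * q v"
  by (simp add: q_def matrix_vector_mult_scaleR power2_eq_square)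

lemma rho_range: "0 \<le> rho" "rho < 1"
proof -
  have h: "sqrt kap \<ge> 1" using kappa_ge1 unfolding kap_def by simp
  have g: "\<And>s::real. s \<ge> 1 \<Longrightarrow> 0 \<le> (s-1)/(s+1) \<and> (s-1)/(s+1) < 1"
    by (auto simp: divide_less_eq)
  show "0 \<le> rho" "rho < 1" unfolding rho_def using g[OF h] by auto
qed

lemma ip_B: "ip v (Bop s r v) = s * q v - r * (norm (A *v v))^2"
proof -
  have "v \<bullet> (A *v (A *v v)) = (norm (A *v v))^2"
    by (simp add: sym_inner[symmetric] power2_norm_eq_inner)
  then show ?thesis
    by (simp add: ip_def Bop_def q_def matrix_vector_mult_diff_distrib matrix_vector_mult_scaleR inner_diff_right)
qed

lemma B_hyp:
  assumes k1: "kap > 1"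
  shows "\<bar>ip v (Bop ((kap + 1) / (kap - 1)) (2 * N / (kap - 1)) v)\<bar> \<le> q v"
proof -
  let ?w = "(norm (A *v v))^2"
  have l: "q v \<le> N * ?w" by (rule L1)
  have u: "N * ?w \<le> kap * q v"
    using mult_left_mono[OF U2[of v] N_nonneg] unfolding kap_def by (simp add: algebra_simps)
  have d: "kap - 1 > 0" using k1 by simp
  have eq: "ip v (Bop ((kap + 1) / (kap - 1)) (2 * N / (kap - 1)) v) = ((kap + 1) * q v - 2 * (N * ?w)) / (kap - 1)"
    unfolding ip_B by (simp add: diff_divide_distrib mult.assoc)
  have a1: "(kap + 1) * q v - 2 * (N * ?w) \<le> (kap - 1) * q v" using l by (simp add: algebra_simps)
  have a2: "- ((kap - 1) * q v) \<le> (kap + 1) * q v - 2 * (N * ?w)" using u by (simp add: algebra_simps)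
  let ?E = "(kap + 1) * q v - 2 * (N * ?w)"
  have b1: "?E / (kap - 1) \<le> q v" using a1 d by (simp add: divide_le_eq mult.commute)
  have b2: "(- ?E) / (kap - 1) \<le> q v" using a2 d by (simp add: divide_le_eq mult.commute)
  show ?thesis unfolding eq abs_le_iff using b1 b2 by (simp add: minus_divide_left)
qed

lemma chebs_closed:
  assumes "r > 0" "2 * s = r + 1 / r"
  shows "chebs s k = (r^k + (1/r)^k) / 2"
proof (induction k rule: nat_2induct)
  case 1 then show ?case by simp
next
  case 2 then show ?case using assms by simp
next
  case (3 k)
  have "r^(Suc (Suc k)) + (1/r)^(Suc (Suc k)) = (r + 1/r) * (r^(Suc k) + (1/r)^(Suc k)) - (r^k + (1/r)^k)"
    using assms(1) by (simp add: field_simps)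
  then show ?case using 3 assms(2) by simp
qed

lemma err_q:
  assumes Ax: "A *v x = y"
  shows "q (x - X y j) \<le> 4 * rho^(2*j) * q x"
proof (cases "kap > 1")
  case True
  let ?s = "(kap + 1) / (kap - 1)" and ?t = "2 * N / (kap - 1)"
  define sk where "sk = sqrt kap"
  have sk1: "sk > 1" using True unfolding sk_def by simp
  have sk2: "sk^2 = kap" using True unfolding sk_def by simp
  have rpos: "rho > 0" unfolding rho_def sk_def[symmetric] using sk1 by (intro divide_pos_pos) auto
  have rel: "2 * ?s = rho + 1 / rho"
  proof -
    have "rho + 1 / rho = ((sk - 1)^2 + (sk + 1)^2) / (sk^2 - 1)"
      unfolding rho_def sk_def[symmetric] using sk1 by (simp add: field_simps power2_eq_square)
    also have "\<dots> = 2 * (sk^2 + 1) / (sk^2 - 1)" by (simp add: power2_eq_square algebra_simps)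
    finally show ?thesis unfolding sk2 by simp
  qed
  define c where "c = chebs ?s j"
  have c: "c = (rho^j + (1/rho)^j) / 2" unfolding c_def by (rule chebs_closed[OF rpos rel])
  have cpos: "c > 0" unfolding c using rpos by (simp add: add_pos_pos)
  have cinv: "1 / c \<le> 2 * rho^j"
  proof -
    have "(1/rho)^j / 2 \<le> c" unfolding c using rpos by (simp add: field_simps)
    moreover have "(1/rho)^j > 0" using rpos by simp
    ultimately have "1 / c \<le> 1 / ((1/rho)^j / 2)" using cpos by (intro divide_left_mono) auto
    also have "\<dots> = 2 * rho^j" using rpos by (simp add: field_simps power_one_over)
    finally show ?thesis .
  qed
  let ?ch = "cheb ?s ?t x j"
  define z where "z = x - (1 / c) *\<^sub>R ?ch"
  have "?ch - c *\<^sub>R x \<in> Kr y j" unfolding c_def by (rule cheb_mem[OF Ax])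
  then have "(- (1 / c)) *\<^sub>R (?ch - c *\<^sub>R x) \<in> Kr y j" unfolding Kr_def by (rule span_scale)
  moreover have "(- (1 / c)) *\<^sub>R (?ch - c *\<^sub>R x) = z" unfolding z_def using cpos
    by (simp add: algebra_simps)
  ultimately have zK: "z \<in> Kr y j" by simp
  have "q (x - X y j) \<le> q (x - z)" by (rule cg_opt[OF Ax zK])
  also have "\<dots> = (1/c)^2 * q ?ch" unfolding z_def by (simp add: q_scale)
  also have "\<dots> \<le> (1/c)^2 * q x" by (rule mult_left_mono[OF cheb_bound[OF B_hyp[OF True]]]) simp
  also have "\<dots> \<le> (2 * rho^j)^2 * q x"
    using cinv cpos by (intro mult_right_mono power_mono q_nonneg) auto
  also have "\<dots> = 4 * rho^(2*j) * q x"
  proof -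
    have "(rho^j)^2 = rho^(2*j)" by (metis power_mult mult.commute)
    then show ?thesis by (simp add: power_mult_distrib)
  qed
  finally show ?thesis .
next
  case False
  then have k1: "kap = 1" using kappa_ge1 unfolding kap_def by simp
  then have r0: "rho = 0" unfolding rho_def by simp
  show ?thesis
  proof (cases j)
    case 0
    then show ?thesis using q_nonneg[of x] by (simp add: cg_0)
  next
    case (Suc m)
    have "(norm (A *v x - M *\<^sub>R x))^2 = (norm (A *v x))^2 - 2 * M * q x + M^2 * (norm x)^2"
    proof -
      have d: "(A *v x) \<bullet> (M *\<^sub>R x) = ((norm (A *v x))^2 + (norm (M *\<^sub>R x))^2 - (norm (A *v x - M *\<^sub>R x))^2) / 2"
        by (rule dot_norm_neg)
      have "(A *v x) \<bullet> (M *\<^sub>R x) = M * q x" by (simp add: q_def sym_inner)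
      moreover have "(norm (M *\<^sub>R x))^2 = M^2 * (norm x)^2" by (simp add: power_mult_distrib)
      moreover have "2 * ((A *v x) \<bullet> (M *\<^sub>R x)) = (norm (A *v x))^2 + (norm (M *\<^sub>R x))^2 - (norm (A *v x - M *\<^sub>R x))^2"
        using d by simp
      ultimately show ?thesis by linarith
    qed
    also have "\<dots> \<le> M * q x - 2 * M * q x + M^2 * (N * q x)"
      using U2[of x] mult_left_mono[OF L2[of x], of "M^2"] by simp
    also have "\<dots> = M * q x * (kap - 1)" unfolding kap_def by (simp add: algebra_simps power2_eq_square)
    also have "\<dots> = 0" using k1 by simp
    finally have "A *v x = M *\<^sub>R x" by simp
    then have xy: "x = (1 / M) *\<^sub>R y" using M_pos Ax by auto
    have "y \<in> Kr y (Suc m)" by (rule y_Kr)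
    then have "(1 / M) *\<^sub>R y \<in> Kr y j" unfolding Suc Kr_def by (rule span_scale)
    then have "q (x - X y j) \<le> q (x - (1 / M) *\<^sub>R y)" by (rule cg_opt[OF Ax])
    also have "\<dots> = 0" using xy by (simp add: q_def)
    finally show ?thesis using r0 Suc by simp
  qed
qed

lemma err_norm:
  assumes Ax: "A *v x = y"
  shows "(norm (x - X y j))^2 \<le> 4 * kap * rho^(2*j) * (norm x)^2"
proof -
  have "(norm (x - X y j))^2 \<le> N * q (x - X y j)" by (rule L2)
  also have "\<dots> \<le> N * (4 * rho^(2*j) * q x)" by (rule mult_left_mono[OF err_q[OF Ax] N_nonneg])
  also have "\<dots> \<le> N * (4 * rho^(2*j) * (M * (norm x)^2))"
    using rho_range by (intro mult_left_mono[OF _ N_nonneg] mult_left_mono[OF U1]) auto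
  also have "\<dots> = 4 * kap * rho^(2*j) * (norm x)^2" unfolding kap_def by (simp add: algebra_simps)
  finally show ?thesis .
qed

lemma diff_bound:
  assumes Ax: "A *v x = y" and j: "j \<ge> 1"
  shows "(norm (X y j - X y (j - 1)))^2 \<le> 16 * kap^2 * (norm x)^2 * rho^(2*(j - 1))"
proof -
  let ?a = "x - X y (j - 1)" and ?b = "x - X y j"
  have "X y j - X y (j - 1) = ?a - ?b" by simp
  then have "(norm (X y j - X y (j - 1)))^2 \<le> (norm ?a + norm ?b)^2"
    by (metis norm_ge_zero norm_triangle_ineq4 power_mono)
  also have "\<dots> \<le> 2 * (norm ?a)^2 + 2 * (norm ?b)^2"
    using zero_le_power2[of "norm ?a - norm ?b"] unfolding power2_sum power2_diff by linarith
  also have "\<dots> \<le> 2 * (4 * kap * rho^(2*(j-1)) * (norm x)^2) + 2 * (4 * kap * rho^(2*j) * (norm x)^2)"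
    using err_norm[OF Ax, of "j-1"] err_norm[OF Ax, of j] by linarith
  also have "\<dots> \<le> 16 * kap * (norm x)^2 * rho^(2*(j - 1))"
  proof -
    have "rho^(2*j) \<le> rho^(2*(j-1))" using rho_range j by (intro power_decreasing) auto
    then have "kap * rho^(2*j) * (norm x)^2 \<le> kap * rho^(2*(j-1)) * (norm x)^2"
      using kappa_ge1 unfolding kap_def by (intro mult_right_mono mult_left_mono) auto
    then show ?thesis by (simp add: algebra_simps)
  qed
  also have "\<dots> \<le> 16 * kap^2 * (norm x)^2 * rho^(2*(j - 1))"
  proof -
    have "kap * 1 \<le> kap * kap" using kappa_ge1 unfolding kap_def by (intro mult_left_mono) auto
    then have "kap \<le> kap^2" by (simp add: power2_eq_square)
    then show ?thesis using rho_range by (intro mult_right_mono) auto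
  qed
  finally show ?thesis .
qed

end

lemma var_le:
  fixes v :: "nat \<Rightarrow> real^'n"
  assumes fin: "finite S" and p1: "sum p S = 1" and m: "m = (\<Sum>j\<in>S. p j *\<^sub>R v j)"
  shows "(\<Sum>j\<in>S. p j * (norm (v j - m))^2) \<le> (\<Sum>j\<in>S. p j * (norm (v j - c))^2)"
proof -
  have e: "(norm (v j - c))^2 = (norm (v j - m))^2 + 2 * ((v j - m) \<bullet> (m - c)) + (norm (m - c))^2" for j
  proof -
    have "(v j - m) \<bullet> (m - c) = ((norm ((v j - m) + (m - c)))^2 - (norm (v j - m))^2 - (norm (m - c))^2) / 2"
      by (rule dot_norm)
    then have "2 * ((v j - m) \<bullet> (m - c)) = (norm ((v j - m) + (m - c)))^2 - (norm (v j - m))^2 - (norm (m - c))^2"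
      by simp
    moreover have "(v j - m) + (m - c) = v j - c" by simp
    ultimately show ?thesis by simp
  qed
  have z: "(\<Sum>j\<in>S. p j *\<^sub>R (v j - m)) = 0"
    by (simp add: scaleR_right_diff_distrib sum_subtractf m[symmetric] scaleR_sum_left[symmetric] p1)
  have cross: "(\<Sum>j\<in>S. p j * ((v j - m) \<bullet> (m - c))) = 0"
  proof -
    have "(\<Sum>j\<in>S. p j * ((v j - m) \<bullet> (m - c))) = (\<Sum>j\<in>S. p j *\<^sub>R (v j - m)) \<bullet> (m - c)"
      by (simp add: inner_sum_left)
    then show ?thesis using z by simp
  qed
  have "(\<Sum>j\<in>S. p j * (norm (v j - c))^2) =
      (\<Sum>j\<in>S. p j * (norm (v j - m))^2) + 2 * (\<Sum>j\<in>S. p j * ((v j - m) \<bullet> (m - c))) + (\<Sum>j\<in>S. p j) * (norm (m - c))^2"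
  proof -
    have e2: "p j * (norm (v j - c))^2 = p j * (norm (v j - m))^2 + 2 * (p j * ((v j - m) \<bullet> (m - c))) + p j * (norm (m - c))^2" for j
      unfolding e by (simp only: distrib_left mult.left_commute)
    show ?thesis unfolding e2 sum.distrib sum_distrib_left[symmetric] sum_distrib_right[symmetric] ..
  qed
  then show ?thesis using cross p1 by simp
qed

lemma telescope:
  fixes f :: "nat \<Rightarrow> 'a::ab_group_add"
  assumes "1 \<le> a" "a \<le> b"
  shows "(\<Sum>j=a..b. f j - f (j - 1)) = f b - f (a - 1)"
proof -
  obtain m n where mn: "a = Suc m" "b = Suc n" using assms by (metis Suc_pred' less_le_trans not_le not_one_le_zero le_neq_implies_less zero_less_one)
  have "(\<Sum>j=Suc m..Suc n. f j - f (j - 1)) = (\<Sum>i=m..n. f (Suc i) - f i)"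
    by (subst sum.shift_bounds_cl_Suc_ivl) simp
  also have "\<dots> = f (Suc n) - f m" using assms mn by (intro sum_Suc_diff) simp
  finally show ?thesis using mn by simp
qed

theorem theorem3p2:
  fixes A :: "real^'n^'n" and y :: "real^'n" and Q :: "nat pmf" and imin imax :: nat
  assumes symm: "transpose A = A"
    and posdef: "\<forall>v. v \<noteq> 0 \<longrightarrow> v \<bullet> (A *v v) > 0"
    and "1 \<le> imin" and "imin < imax" and "imax \<le> CARD('n)"
    and supp: "set_pmf Q \<subseteq> {imin..imax}"
    and pos: "\<forall>j\<in>{imin..imax}. pmf Q j > 0"
  defines "x \<equiv> matrix_inv A *v y"
    and "xtss \<equiv> (\<lambda>j. (1 / pmf Q j) *\<^sub>R (cg_iterate A y 0 j - cg_iterate A y 0 (j - 1))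
                           + cg_iterate A y 0 (imin - 1))"
    and "\<rho> \<equiv> (sqrt (cond2 A) - 1) / (sqrt (cond2 A) + 1)"
  shows "measure_pmf.expectation Q xtss = cg_iterate A y 0 imax
    \<and> measure_pmf.expectation Q (\<lambda>j. (norm (xtss j - measure_pmf.expectation Q xtss))\<^sup>2)
        \<le> 16 * (cond2 A)\<^sup>2 * (norm x)\<^sup>2 * (\<Sum>j=imin..imax. \<rho> ^ (2 * (j - 1)) / pmf Q j)"
proof -
  interpret spd A using symm posdef by unfold_locales
  let ?S = "{imin..imax}"
  have kap: "cond2 A = kap" by (simp add: cond2_def kap_def M_def N_def)
  have rho: "\<rho> = rho" unfolding \<rho>_def rho_def kap ..
  have X: "cg_iterate A y 0 j = X y j" for j by (simp add: X_def)
  have Ax: "A *v x = y" unfolding x_def by (rule A_inv_A)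
  have fin: "finite ?S" by simp
  have p1: "sum (pmf Q) ?S = 1" by (rule sum_pmf_eq_1[OF fin supp])
  have ppos: "j \<in> ?S \<Longrightarrow> pmf Q j > 0" for j using pos by auto
  have E: "measure_pmf.expectation Q f = (\<Sum>j\<in>?S. pmf Q j *\<^sub>R f j)" for f :: "nat \<Rightarrow> real^'n"
    by (rule integral_measure_pmf[OF fin]) (use supp in auto)
  have Er: "measure_pmf.expectation Q g = (\<Sum>j\<in>?S. g j * pmf Q j)" for g :: "nat \<Rightarrow> real"
    by (rule integral_measure_pmf_real[OF fin]) (use supp in auto)
  let ?D = "\<lambda>j. X y j - X y (j - 1)"
  let ?c = "X y (imin - 1)"
  have xt: "xtss j = (1 / pmf Q j) *\<^sub>R ?D j + ?c" for j unfolding xtss_def X ..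
  have "(\<Sum>j\<in>?S. pmf Q j *\<^sub>R xtss j) = (\<Sum>j\<in>?S. ?D j + pmf Q j *\<^sub>R ?c)"
  proof (intro sum.cong refl)
    fix j assume "j \<in> ?S"
    then have "pmf Q j > 0" using ppos by blast
    then show "pmf Q j *\<^sub>R xtss j = ?D j + pmf Q j *\<^sub>R ?c" by (simp add: xt scaleR_add_right)
  qed
  also have "\<dots> = (\<Sum>j\<in>?S. ?D j) + (\<Sum>j\<in>?S. pmf Q j) *\<^sub>R ?c"
    by (simp add: sum.distrib scaleR_sum_left)
  also have "\<dots> = X y imax - ?c + ?c"
    using telescope[of imin imax "X y"] assms(3,4) p1 by simp
  finally have mean: "measure_pmf.expectation Q xtss = X y imax" unfolding E by simp
  have "measure_pmf.expectation Q (\<lambda>j. (norm (xtss j - X y imax))\<^sup>2)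
      = (\<Sum>j\<in>?S. pmf Q j * (norm (xtss j - X y imax))\<^sup>2)"
    unfolding Er by (simp add: mult.commute)
  also have "\<dots> \<le> (\<Sum>j\<in>?S. pmf Q j * (norm (xtss j - ?c))\<^sup>2)"
    by (rule var_le[OF fin p1]) (use mean E in simp)
  also have "\<dots> = (\<Sum>j\<in>?S. (norm (?D j))\<^sup>2 / pmf Q j)"
  proof (intro sum.cong refl)
    fix j assume j: "j \<in> ?S"
    have pj: "pmf Q j > 0" using ppos j .
    have "xtss j - ?c = (1 / pmf Q j) *\<^sub>R ?D j" by (simp add: xt)
    then have "(norm (xtss j - ?c))\<^sup>2 = (norm (?D j))\<^sup>2 / (pmf Q j)^2"
      using pj by (simp add: power_divide)
    then show "pmf Q j * (norm (xtss j - ?c))\<^sup>2 = (norm (?D j))\<^sup>2 / pmf Q j"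
      using pj by (simp add: power2_eq_square)
  qed
  also have "\<dots> \<le> (\<Sum>j\<in>?S. 16 * kap^2 * (norm x)^2 * (rho^(2*(j - 1)) / pmf Q j))"
  proof (intro sum_mono)
    fix j assume j: "j \<in> ?S"
    have pj: "pmf Q j > 0" using ppos j .
    have "j \<ge> 1" using j assms(3) by auto
    then have "(norm (?D j))\<^sup>2 \<le> 16 * kap^2 * (norm x)^2 * rho^(2*(j - 1))"
      by (rule diff_bound[OF Ax])
    then show "(norm (?D j))\<^sup>2 / pmf Q j \<le> 16 * kap^2 * (norm x)^2 * (rho^(2*(j - 1)) / pmf Q j)"
    proof -
      have "(norm (?D j))\<^sup>2 / pmf Q j \<le> (16 * kap^2 * (norm x)^2 * rho^(2*(j - 1))) / pmf Q j"
        using pj \<open>(norm (?D j))\<^sup>2 \<le> _\<close> by (intro divide_right_mono) auto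
      also have "\<dots> = 16 * kap^2 * (norm x)^2 * (rho^(2*(j - 1)) / pmf Q j)" by simp
      finally show ?thesis .
    qed
  qed
  also have "\<dots> = 16 * (cond2 A)\<^sup>2 * (norm x)\<^sup>2 * (\<Sum>j=imin..imax. \<rho> ^ (2 * (j - 1)) / pmf Q j)"
    unfolding kap rho by (simp add: sum_distrib_left)
  finally show ?thesis using mean X by simp
qed

end
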